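(* Let $X,Y$ be $\mathfrak{Q}$-preordered $\mathfrak{Q}$-subsets and $f\colon\mathsf{P}X\to\mathsf{P}Y$ a $\mathfrak{Q}$-order-preserving map. The following are equivalent: (i) $f$ is a left adjoint in $\mathfrak{Q}\text{-}\mathbf{FOrd}$, i.e. there is a $\mathfrak{Q}$-order-preserving $g\colon\mathsf{P}Y\to\mathsf{P}X$ with $f\dashv g$ (a $\mathfrak{Q}$-axiality from $X$ to $Y$); (ii) $f$ is a left adjoint between the underlying preordered sets of $\mathsf{P}X$ and $\mathsf{P}Y$, and $f(u\circ\mu)=u\circ f\mu$ for all $\mu\in\mathsf{P}X$, $q\in\mathfrak{Q}$ and $u\in\mathcal{D}\mathfrak{Q}(|\mu|,q)$; (iii) $f$ is a left adjoint between the underlying preordered sets of $\mathsf{P}X$ and $\mathsf{P}Y$, and $f(u\circ\mathsf{y}_X x)=u\circ f\mathsf{y}_X x$ for all $x\in X$, $q\in\mathfrak{Q}$ and $u\in\mathcal{D}\mathfrak{Q}(|x|,q)$.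
   Context: $(\mathfrak{Q},\&,e)$ is a non-trivial unital quantale (complete lattice with associative multiplication with unit $e$ preserving joins in each variable, $\bot<e$), implications $p\& q\le r\iff p\le r/ q\iff q\le p\backslash r$, and $\mathcal{D}\mathfrak{Q}(p,q)=\{u\mid (u/ p)\& p=u=q\&(q\backslash u)\}$. A $\mathfrak{Q}$-subset is a set $X$ with $|\cdot|\colon X\to\mathfrak{Q}$; $\mathbf{1}_q$ is the singleton $\{*\}$ with $|*|=q$, and $u\in\mathcal{D}\mathfrak{Q}(p,q)$ is identified with the $\mathfrak{Q}$-relation from $\mathbf{1}_p$ to $\mathbf{1}_q$ with value $u$. A $\mathfrak{Q}$-relation from $X$ to $Y$ is a map $\phi\colon X\times Y\to\mathfrak{Q}$ with $\phi(x,y)\in\mathcal{D}\mathfrak{Q}(|x|,|y|)$, ordered pointwise; composition $(\psi\circ\phi)(x,z)=\bigvee_y(\psi(y,z)/|y|)\&\phi(x,y)$; $\xi\swarrow\phi$ is the largest $\psi'$ with $\psi'\circ\phi\le\xi$, and $\psi\searrow\xi$ the largest $\phi'$ with $\psi\circ\phi'\le\xi$. $\mathrm{id}_X(x,x)=|x|$, $\bot$ elsewhere. A $\mathfrak{Q}$-preordered $\mathfrak{Q}$-subset is a $\mathfrak{Q}$-subset $X$ with a $\mathfrak{Q}$-relation $1_X^{\natural}$ from $X$ to $X$ satisfying $\mathrm{id}_X\le 1_X^{\natural}$ and $1_X^{\natural}\circ 1_X^{\natural}\le 1_X^{\natural}$; its underlying preorder is $x\le y\iff |x|=|y|$ and $|x|\le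 1_X^{\natural}(x,y)$. A $\mathfrak{Q}$-order-preserving map $f\colon X\to Y$ satisfies $|fx|=|x|$ and $1_X^{\natural}(x,x')\le 1_Y^{\natural}(fx,fx')$; for such $f,g\colon X\to Y$, $f\le g$ means $|x|\le 1_Y^{\natural}(fx,gx)$ for all $x$. A $\mathfrak{Q}$-Galois connection $f\dashv g$ ($f\colon X\to Y$, $g\colon Y\to X$ $\mathfrak{Q}$-order-preserving) means $1_X\le gf$ and $fg\le 1_Y$; $\mathfrak{Q}\text{-}\mathbf{FOrd}$ is the category of $\mathfrak{Q}$-preordered $\mathfrak{Q}$-subsets and $\mathfrak{Q}$-order-preserving maps. The $\mathfrak{Q}$-powerset $\mathsf{P}X$ is the $\mathfrak{Q}$-subset of all potential lower $\mathfrak{Q}$-subsets, i.e. $\mathfrak{Q}$-relations $\mu$ from $X$ to some $\mathbf{1}_q$ with $\mu\circ 1_X^{\natural}\le\mu$, with $|\mu|=q$ and $\mathfrak{Q}$-preorder $1_{\mathsf{P}X}^{\natural}(\mu,\mu')=\mu'\swarrow\mu$. The Yoneda embedding $\mathsf{y}_X\colon X\to\mathsf{P}X$ sends $x$ to $1_X^{\natural}(-,x)$, a $\mathfrak{Q}$-relation from $X$ to $\mathbf{1}_{|x|}$. *)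

theory Defs
  imports Main
begin

definition quantale :: "('q::complete_lattice \<Rightarrow> 'q \<Rightarrow> 'q) \<Rightarrow> 'q \<Rightarrow> bool" where
  "quantale mult e \<longleftrightarrow>
     (\<forall>a b c. mult (mult a b) c = mult a (mult b c)) \<and>
     (\<forall>a. mult e a = a \<and> mult a e = a) \<and>
     (\<forall>a S. mult a (Sup S) = Sup (mult a ` S)) \<and>
     (\<forall>b S. mult (Sup S) b = Sup ((\<lambda>a. mult a b) ` S)) \<and>
     bot < e"

definition rimp :: "('q::complete_lattice \<Rightarrow> 'q \<Rightarrow> 'q) \<Rightarrow> 'q \<Rightarrow> 'q \<Rightarrow> 'q" where
  "rimp mult r q = Sup {p. mult p q \<le> r}"

definition limp :: "('q::complete_lattice \<Rightarrow> 'q \<Rightarrow> 'q) \<Rightarrow> 'q \<Rightarrow> 'q \<Rightarrow> 'q" where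
  "limp mult p r = Sup {q. mult p q \<le> r}"

definition DQ :: "('q::complete_lattice \<Rightarrow> 'q \<Rightarrow> 'q) \<Rightarrow> 'q \<Rightarrow> 'q \<Rightarrow> 'q set" where
  "DQ mult p q = {u. mult (rimp mult u p) p = u \<and> u = mult q (limp mult q u)}"

definition qrel :: "('q::complete_lattice \<Rightarrow> 'q \<Rightarrow> 'q) \<Rightarrow> 'x set \<Rightarrow> ('x \<Rightarrow> 'q)
     \<Rightarrow> 'y set \<Rightarrow> ('y \<Rightarrow> 'q) \<Rightarrow> ('x \<Rightarrow> 'y \<Rightarrow> 'q) \<Rightarrow> bool" where
  "qrel mult X nX Y nY \<phi> \<longleftrightarrow> (\<forall>x\<in>X. \<forall>y\<in>Y. \<phi> x y \<in> DQ mult (nX x) (nY y))"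

definition rel_le :: "'x set \<Rightarrow> 'y set \<Rightarrow> ('x \<Rightarrow> 'y \<Rightarrow> 'q::complete_lattice)
     \<Rightarrow> ('x \<Rightarrow> 'y \<Rightarrow> 'q) \<Rightarrow> bool" where
  "rel_le X Y \<phi> \<psi> \<longleftrightarrow> (\<forall>x\<in>X. \<forall>y\<in>Y. \<phi> x y \<le> \<psi> x y)"

definition qcomp :: "('q::complete_lattice \<Rightarrow> 'q \<Rightarrow> 'q) \<Rightarrow> 'y set \<Rightarrow> ('y \<Rightarrow> 'q)
     \<Rightarrow> ('x \<Rightarrow> 'y \<Rightarrow> 'q) \<Rightarrow> ('y \<Rightarrow> 'z \<Rightarrow> 'q) \<Rightarrow> ('x \<Rightarrow> 'z \<Rightarrow> 'q)" where
  "qcomp mult Y nY \<phi> \<psi> = (\<lambda>x z. Sup {mult (rimp mult (\<psi> y z) (nY y)) (\<phi> x y) | y. y \<in> Y})"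

definition qlift :: "('q::complete_lattice \<Rightarrow> 'q \<Rightarrow> 'q) \<Rightarrow> 'x set \<Rightarrow> 'y set \<Rightarrow> ('y \<Rightarrow> 'q)
     \<Rightarrow> 'z set \<Rightarrow> ('z \<Rightarrow> 'q) \<Rightarrow> ('x \<Rightarrow> 'z \<Rightarrow> 'q) \<Rightarrow> ('x \<Rightarrow> 'y \<Rightarrow> 'q) \<Rightarrow> ('y \<Rightarrow> 'z \<Rightarrow> 'q)" where
  "qlift mult X Y nY Z nZ \<xi> \<phi> =
     (\<lambda>y z. Sup {\<psi> y z | \<psi>. qrel mult Y nY Z nZ \<psi> \<and> rel_le X Z (qcomp mult Y nY \<phi> \<psi>) \<xi>})"

definition qid :: "('x \<Rightarrow> 'q::complete_lattice) \<Rightarrow> 'x \<Rightarrow> 'x \<Rightarrow> 'q" where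
  "qid nX = (\<lambda>x y. if x = y then nX x else bot)"

definition qpreorder :: "('q::complete_lattice \<Rightarrow> 'q \<Rightarrow> 'q) \<Rightarrow> 'x set \<Rightarrow> ('x \<Rightarrow> 'q)
     \<Rightarrow> ('x \<Rightarrow> 'x \<Rightarrow> 'q) \<Rightarrow> bool" where
  "qpreorder mult X nX R \<longleftrightarrow> qrel mult X nX X nX R \<and> rel_le X X (qid nX) R
      \<and> rel_le X X (qcomp mult X nX R R) R"

definition uleq :: "('x \<Rightarrow> 'q::complete_lattice) \<Rightarrow> ('x \<Rightarrow> 'x \<Rightarrow> 'q) \<Rightarrow> 'x \<Rightarrow> 'x \<Rightarrow> bool" where
  "uleq nX R x y \<longleftrightarrow> nX x = nX y \<and> nX x \<le> R x y"

definition qord_map :: "'x set \<Rightarrow> ('x \<Rightarrow> 'q::complete_lattice) \<Rightarrow> ('x \<Rightarrow> 'x \<Rightarrow> 'q)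
     \<Rightarrow> 'y set \<Rightarrow> ('y \<Rightarrow> 'q) \<Rightarrow> ('y \<Rightarrow> 'y \<Rightarrow> 'q) \<Rightarrow> ('x \<Rightarrow> 'y) \<Rightarrow> bool" where
  "qord_map X nX RX Y nY RY f \<longleftrightarrow>
     (\<forall>x\<in>X. f x \<in> Y \<and> nY (f x) = nX x) \<and> (\<forall>x\<in>X. \<forall>x'\<in>X. RX x x' \<le> RY (f x) (f x'))"

definition map_le :: "'x set \<Rightarrow> ('x \<Rightarrow> 'q::complete_lattice) \<Rightarrow> ('y \<Rightarrow> 'y \<Rightarrow> 'q)
     \<Rightarrow> ('x \<Rightarrow> 'y) \<Rightarrow> ('x \<Rightarrow> 'y) \<Rightarrow> bool" where
  "map_le X nX RY f g \<longleftrightarrow> (\<forall>x\<in>X. nX x \<le> RY (f x) (g x))"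

definition qgalois :: "'x set \<Rightarrow> ('x \<Rightarrow> 'q::complete_lattice) \<Rightarrow> ('x \<Rightarrow> 'x \<Rightarrow> 'q)
     \<Rightarrow> 'y set \<Rightarrow> ('y \<Rightarrow> 'q) \<Rightarrow> ('y \<Rightarrow> 'y \<Rightarrow> 'q) \<Rightarrow> ('x \<Rightarrow> 'y) \<Rightarrow> ('y \<Rightarrow> 'x) \<Rightarrow> bool" where
  "qgalois X nX RX Y nY RY f g \<longleftrightarrow>
     map_le X nX RX id (g \<circ> f) \<and> map_le Y nY RY (f \<circ> g) id"

definition ul_left_adjoint :: "'x set \<Rightarrow> ('x \<Rightarrow> 'q::complete_lattice) \<Rightarrow> ('x \<Rightarrow> 'x \<Rightarrow> 'q)
     \<Rightarrow> 'y set \<Rightarrow> ('y \<Rightarrow> 'q) \<Rightarrow> ('y \<Rightarrow> 'y \<Rightarrow> 'q) \<Rightarrow> ('x \<Rightarrow> 'y) \<Rightarrow> bool" where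
  "ul_left_adjoint X nX RX Y nY RY f \<longleftrightarrow>
     (\<exists>g. (\<forall>y\<in>Y. g y \<in> X) \<and>
          (\<forall>x\<in>X. \<forall>y\<in>Y. uleq nY RY (f x) y \<longleftrightarrow> uleq nX RX x (g y)))"

text \<open>An element mu of P X with |mu| = q is represented as the pair (q, m), where
  m x is the value mu(x, *) of the Q-relation from X to 1_q (m is bot outside X,
  to have a canonical representative).\<close>

definition pset :: "('q::complete_lattice \<Rightarrow> 'q \<Rightarrow> 'q) \<Rightarrow> 'x set \<Rightarrow> ('x \<Rightarrow> 'q)
     \<Rightarrow> ('x \<Rightarrow> 'x \<Rightarrow> 'q) \<Rightarrow> ('q \<times> ('x \<Rightarrow> 'q)) set" where
  "pset mult X nX R = {(q, m). (\<forall>x. x \<notin> X \<longrightarrow> m x = bot) \<and>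
      qrel mult X nX {()} (\<lambda>_. q) (\<lambda>x _. m x) \<and>
      rel_le X {()} (qcomp mult X nX R (\<lambda>x _. m x)) (\<lambda>x _. m x)}"

definition pnorm :: "'q \<times> ('x \<Rightarrow> 'q) \<Rightarrow> 'q" where
  "pnorm \<mu> = fst \<mu>"

text \<open>1_{PX}(mu, mu') = mu' swarrow mu.\<close>

definition prel :: "('q::complete_lattice \<Rightarrow> 'q \<Rightarrow> 'q) \<Rightarrow> 'x set
     \<Rightarrow> 'q \<times> ('x \<Rightarrow> 'q) \<Rightarrow> 'q \<times> ('x \<Rightarrow> 'q) \<Rightarrow> 'q" where
  "prel mult X \<mu> \<mu>' =
     qlift mult X {()} (\<lambda>_. fst \<mu>) {()} (\<lambda>_. fst \<mu>')
        (\<lambda>x _. snd \<mu>' x) (\<lambda>x _. snd \<mu> x) () ()"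

text \<open>u o mu for mu in P X with |mu| = p and u in DQ(p, q) (u viewed as a
  Q-relation from 1_p to 1_q): (u o mu)(x) = (u / p) & mu(x), with |u o mu| = q.\<close>

definition pcomp :: "('q::complete_lattice \<Rightarrow> 'q \<Rightarrow> 'q) \<Rightarrow> 'q \<Rightarrow> 'q
     \<Rightarrow> 'q \<times> ('x \<Rightarrow> 'q) \<Rightarrow> 'q \<times> ('x \<Rightarrow> 'q)" where
  "pcomp mult u q \<mu> = (q, \<lambda>x. mult (rimp mult u (fst \<mu>)) (snd \<mu> x))"

definition yon :: "'x set \<Rightarrow> ('x \<Rightarrow> 'q::complete_lattice) \<Rightarrow> ('x \<Rightarrow> 'x \<Rightarrow> 'q)
     \<Rightarrow> 'x \<Rightarrow> 'q \<times> ('x \<Rightarrow> 'q)" where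
  "yon X nX R x = (nX x, \<lambda>z. if z \<in> X then R z x else bot)"

end

theory Submission imports Defs begin

definition ule :: "'x set \<Rightarrow> 'q::complete_lattice \<times> ('x \<Rightarrow> 'q) \<Rightarrow> 'q \<times> ('x \<Rightarrow> 'q) \<Rightarrow> bool" where
  "ule X \<mu> \<nu> \<longleftrightarrow> fst \<mu> = fst \<nu> \<and> (\<forall>x\<in>X. snd \<mu> x \<le> snd \<nu> x)"

lemma ule_refl: "ule X \<mu> \<mu>" unfolding ule_def by simp
lemma ule_trans: "ule X a b \<Longrightarrow> ule X b c \<Longrightarrow> ule X a c" unfolding ule_def by (auto intro: order_trans)

locale qt =
  fixes mult :: "'q::complete_lattice \<Rightarrow> 'q \<Rightarrow> 'q" (infixl "\<odot>" 70) and e :: 'q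
  assumes Q: "quantale mult e"
begin

lemma assoc: "(a \<odot> b) \<odot> c = a \<odot> (b \<odot> c)" using Q unfolding quantale_def by blast
lemma unitl: "e \<odot> a = a" using Q unfolding quantale_def by blast
lemma unitr: "a \<odot> e = a" using Q unfolding quantale_def by blast
lemma supr: "a \<odot> Sup S = Sup ((\<odot>) a ` S)" using Q unfolding quantale_def by blast
lemma supl: "Sup S \<odot> b = Sup ((\<lambda>a. a \<odot> b) ` S)" using Q unfolding quantale_def by blast

lemma monol: "a \<le> b \<Longrightarrow> a \<odot> c \<le> b \<odot> c"
proof -
  assume "a \<le> b"
  then have "Sup {a,b} = b" by (simp add: sup_absorb2)
  have "b \<odot> c = Sup {a,b} \<odot> c" using \<open>Sup {a,b} = b\<close> by simp
  also have "\<dots> = Sup ((\<lambda>a. a \<odot> c) ` {a,b})" by (rule supl)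
  finally have eq: "b \<odot> c = sup (a \<odot> c) (b \<odot> c)" by simp
  have "a \<odot> c \<le> sup (a \<odot> c) (b \<odot> c)" by (rule sup.cobounded1)
  also have "\<dots> = b \<odot> c" using eq by (rule sym)
  finally show ?thesis .
qed

lemma monor: "a \<le> b \<Longrightarrow> c \<odot> a \<le> c \<odot> b"
proof -
  assume "a \<le> b"
  then have "Sup {a,b} = b" by (simp add: sup_absorb2)
  have "c \<odot> b = c \<odot> Sup {a,b}" using \<open>Sup {a,b} = b\<close> by simp
  also have "\<dots> = Sup ((\<odot>) c ` {a,b})" by (rule supr)
  finally have eq: "c \<odot> b = sup (c \<odot> a) (c \<odot> b)" by simp
  have "c \<odot> a \<le> sup (c \<odot> a) (c \<odot> b)" by (rule sup.cobounded1)
  also have "\<dots> = c \<odot> b" using eq by (rule sym)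
  finally show ?thesis .
qed

lemma mono2: "a \<le> b \<Longrightarrow> c \<le> d \<Longrightarrow> a \<odot> c \<le> b \<odot> d"
  by (meson monol monor order_trans)

lemma botr: "a \<odot> bot = bot" using supr[of a "{}"] by simp
lemma botl: "bot \<odot> a = bot" using supl[of "{}" a] by simp

lemma rimp_gal: "p \<odot> q \<le> r \<longleftrightarrow> p \<le> rimp mult r q"
proof
  assume "p \<odot> q \<le> r" then show "p \<le> rimp mult r q" unfolding rimp_def by (simp add: Sup_upper)
next
  assume "p \<le> rimp mult r q"
  then have "p \<odot> q \<le> rimp mult r q \<odot> q" by (rule monol)
  also have "\<dots> = Sup ((\<lambda>a. a \<odot> q) ` {p. p \<odot> q \<le> r})" unfolding rimp_def by (rule supl)
  also have "\<dots> \<le> r" by (auto intro: Sup_least)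
  finally show "p \<odot> q \<le> r" .
qed

lemma limp_gal: "p \<odot> q \<le> r \<longleftrightarrow> q \<le> limp mult p r"
proof
  assume "p \<odot> q \<le> r" then show "q \<le> limp mult p r" unfolding limp_def by (simp add: Sup_upper)
next
  assume "q \<le> limp mult p r"
  then have "p \<odot> q \<le> p \<odot> limp mult p r" by (rule monor)
  also have "\<dots> = Sup ((\<odot>) p ` {q. p \<odot> q \<le> r})" unfolding limp_def by (rule supr)
  also have "\<dots> \<le> r" by (auto intro: Sup_least)
  finally show "p \<odot> q \<le> r" .
qed

lemma rimp_cu: "rimp mult r q \<odot> q \<le> r" using rimp_gal by blast
lemma limp_cu: "p \<odot> limp mult p r \<le> r" using limp_gal by blast

lemma rimp_mono: "a \<le> b \<Longrightarrow> rimp mult a q \<le> rimp mult b q"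
  by (meson order_trans rimp_cu rimp_gal)

lemma limp_mono: "a \<le> b \<Longrightarrow> limp mult q a \<le> limp mult q b"
  by (meson order_trans limp_cu limp_gal)

lemma DQ1: "u \<in> DQ mult p q \<Longrightarrow> rimp mult u p \<odot> p = u" unfolding DQ_def by blast
lemma DQ2: "u \<in> DQ mult p q \<Longrightarrow> q \<odot> limp mult q u = u" unfolding DQ_def by auto

lemma DQ_refl: "p \<in> DQ mult p p"
proof -
  have "e \<le> rimp mult p p" unfolding rimp_gal[symmetric] unitl by simp
  then have "e \<odot> p \<le> rimp mult p p \<odot> p" by (rule monol)
  then have a: "p \<le> rimp mult p p \<odot> p" by (simp add: unitl)
  have "e \<le> limp mult p p" unfolding limp_gal[symmetric] unitr by simp
  then have "p \<odot> e \<le> p \<odot> limp mult p p" by (rule monor)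
  then have b: "p \<le> p \<odot> limp mult p p" by (simp add: unitr)
  show ?thesis unfolding DQ_def using antisym[OF rimp_cu a] antisym[OF limp_cu b] by simp
qed

lemma DQ_bot: "bot \<in> DQ mult p q"
proof -
  have "rimp mult bot p \<odot> p = bot" using rimp_cu[of bot p] by (simp add: bot_unique)
  moreover have "q \<odot> limp mult q bot = bot" using limp_cu[of q bot] by (simp add: bot_unique)
  ultimately show ?thesis unfolding DQ_def by simp
qed

lemma K: "w \<in> DQ mult p q \<Longrightarrow> a \<in> DQ mult r p \<Longrightarrow> rimp mult w p \<odot> a = w \<odot> limp mult p a"
proof -
  assume w: "w \<in> DQ mult p q" and a: "a \<in> DQ mult r p"
  have "rimp mult w p \<odot> a = rimp mult w p \<odot> (p \<odot> limp mult p a)" using DQ2[OF a] by simp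
  also have "\<dots> = (rimp mult w p \<odot> p) \<odot> limp mult p a" by (simp add: assoc)
  also have "\<dots> = w \<odot> limp mult p a" using DQ1[OF w] by simp
  finally show ?thesis .
qed

lemma DQ_Sup: "S \<subseteq> DQ mult p q \<Longrightarrow> Sup S \<in> DQ mult p q"
proof -
  assume S: "S \<subseteq> DQ mult p q"
  have a: "Sup S \<le> rimp mult (Sup S) p \<odot> p"
  proof (rule Sup_least)
    fix v assume v: "v \<in> S"
    then have vD: "v \<in> DQ mult p q" using S by (rule subsetD[rotated])
    have "v = rimp mult v p \<odot> p" using DQ1[OF vD] by (rule sym)
    also have "\<dots> \<le> rimp mult (Sup S) p \<odot> p"
      by (rule monol, rule rimp_mono, rule Sup_upper, rule v)
    finally show "v \<le> rimp mult (Sup S) p \<odot> p" .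
  qed
  have b: "Sup S \<le> q \<odot> limp mult q (Sup S)"
  proof (rule Sup_least)
    fix v assume v: "v \<in> S"
    then have vD: "v \<in> DQ mult p q" using S by (rule subsetD[rotated])
    have "v = q \<odot> limp mult q v" using DQ2[OF vD] by (rule sym)
    also have "\<dots> \<le> q \<odot> limp mult q (Sup S)"
      by (rule monor, rule limp_mono, rule Sup_upper, rule v)
    finally show "v \<le> q \<odot> limp mult q (Sup S)" .
  qed
  have c1: "rimp mult (Sup S) p \<odot> p = Sup S" by (rule antisym[OF rimp_cu a])
  have c2: "Sup S = q \<odot> limp mult q (Sup S)" by (rule antisym[OF b limp_cu])
  show ?thesis unfolding DQ_def using c1 c2 by blast
qed

lemma comp_DQ: "u \<in> DQ mult p q \<Longrightarrow> a \<in> DQ mult r p \<Longrightarrow> rimp mult u p \<odot> a \<in> DQ mult r q"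
proof -
  assume u: "u \<in> DQ mult p q" and a: "a \<in> DQ mult r p"
  define c where "c = rimp mult u p \<odot> a"
  have c2: "c = u \<odot> limp mult p a" using K[OF u a] c_def by simp
  have "c = rimp mult u p \<odot> (rimp mult a r \<odot> r)" using DQ1[OF a] c_def by simp
  also have "\<dots> = (rimp mult u p \<odot> rimp mult a r) \<odot> r" by (simp add: assoc)
  also have "\<dots> \<le> rimp mult c r \<odot> r"
    by (rule monol, unfold rimp_gal[symmetric], simp add: assoc DQ1[OF a] c_def)
  finally have A: "c \<le> rimp mult c r \<odot> r" .
  have "c = (q \<odot> limp mult q u) \<odot> limp mult p a" using DQ2[OF u] c2 by simp
  also have "\<dots> = q \<odot> (limp mult q u \<odot> limp mult p a)" by (simp add: assoc)
  also have "\<dots> \<le> q \<odot> limp mult q c"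
    by (rule monor, unfold limp_gal[symmetric], simp add: assoc[symmetric] DQ2[OF u] c2)
  finally have B: "c \<le> q \<odot> limp mult q c" .
  show "c \<in> DQ mult r q" unfolding DQ_def using antisym[OF rimp_cu A] antisym[OF limp_cu B] by simp
qed

lemma comp_assoc: "u \<in> DQ mult p q \<Longrightarrow> a \<in> DQ mult r p \<Longrightarrow> c \<in> DQ mult s r \<Longrightarrow>
   rimp mult (rimp mult u p \<odot> a) r \<odot> c = rimp mult u p \<odot> (rimp mult a r \<odot> c)"
proof -
  assume u: "u \<in> DQ mult p q" and a: "a \<in> DQ mult r p" and c: "c \<in> DQ mult s r"
  have b: "rimp mult u p \<odot> a \<in> DQ mult r q" by (rule comp_DQ[OF u a])
  have "rimp mult (rimp mult u p \<odot> a) r \<odot> c = (rimp mult u p \<odot> a) \<odot> limp mult r c" by (rule K[OF b c])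
  also have "\<dots> = rimp mult u p \<odot> (a \<odot> limp mult r c)" by (simp add: assoc)
  also have "\<dots> = rimp mult u p \<odot> (rimp mult a r \<odot> c)" using K[OF a c] by simp
  finally show ?thesis .
qed

lemma unit_DQ: "a \<in> DQ mult r p \<Longrightarrow> rimp mult p p \<odot> a = a"
proof -
  assume a: "a \<in> DQ mult r p"
  show ?thesis using K[OF DQ_refl a] DQ2[OF a] by simp
qed


lemma pset_iff: "(q, m) \<in> pset mult X nX R \<longleftrightarrow>
   (\<forall>x. x \<notin> X \<longrightarrow> m x = bot) \<and> (\<forall>x\<in>X. m x \<in> DQ mult (nX x) q) \<and>
   (\<forall>z\<in>X. \<forall>y\<in>X. rimp mult (m y) (nX y) \<odot> R z y \<le> m z)"
  unfolding pset_def qrel_def rel_le_def qcomp_def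
  by (simp add: Sup_le_iff) blast

lemma pset_D: "\<mu> \<in> pset mult X nX R \<Longrightarrow> x \<in> X \<Longrightarrow> snd \<mu> x \<in> DQ mult (nX x) (fst \<mu>)"
  using pset_iff[of "fst \<mu>" "snd \<mu>"] by simp
lemma pset_out: "\<mu> \<in> pset mult X nX R \<Longrightarrow> x \<notin> X \<Longrightarrow> snd \<mu> x = bot"
  using pset_iff[of "fst \<mu>" "snd \<mu>"] by simp
lemma pset_low: "\<mu> \<in> pset mult X nX R \<Longrightarrow> z \<in> X \<Longrightarrow> y \<in> X \<Longrightarrow>
   rimp mult (snd \<mu> y) (nX y) \<odot> R z y \<le> snd \<mu> z"
  using pset_iff[of "fst \<mu>" "snd \<mu>"] by simp

lemma prel_eq: "prel mult X \<mu> \<mu>' = Sup {v. v \<in> DQ mult (fst \<mu>) (fst \<mu>') \<and>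
     (\<forall>x\<in>X. rimp mult v (fst \<mu>) \<odot> snd \<mu> x \<le> snd \<mu>' x)}"
proof -
  have "{\<psi> () () |\<psi>. qrel mult {()} (\<lambda>_. fst \<mu>) {()} (\<lambda>_. fst \<mu>') \<psi> \<and>
      rel_le X {()} (qcomp mult {()} (\<lambda>_. fst \<mu>) (\<lambda>x _. snd \<mu> x) \<psi>) (\<lambda>x _. snd \<mu>' x)}
    = {v. v \<in> DQ mult (fst \<mu>) (fst \<mu>') \<and>
     (\<forall>x\<in>X. rimp mult v (fst \<mu>) \<odot> snd \<mu> x \<le> snd \<mu>' x)}"
  proof (rule set_eqI, rule iffI)
    fix v assume "v \<in> {\<psi> () () |\<psi>. qrel mult {()} (\<lambda>_. fst \<mu>) {()} (\<lambda>_. fst \<mu>') \<psi> \<and>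
      rel_le X {()} (qcomp mult {()} (\<lambda>_. fst \<mu>) (\<lambda>x _. snd \<mu> x) \<psi>) (\<lambda>x _. snd \<mu>' x)}"
    then show "v \<in> {v. v \<in> DQ mult (fst \<mu>) (fst \<mu>') \<and>
     (\<forall>x\<in>X. rimp mult v (fst \<mu>) \<odot> snd \<mu> x \<le> snd \<mu>' x)}"
      unfolding qrel_def rel_le_def qcomp_def by auto
  next
    fix v assume "v \<in> {v. v \<in> DQ mult (fst \<mu>) (fst \<mu>') \<and>
     (\<forall>x\<in>X. rimp mult v (fst \<mu>) \<odot> snd \<mu> x \<le> snd \<mu>' x)}"
    then show "v \<in> {\<psi> () () |\<psi>. qrel mult {()} (\<lambda>_. fst \<mu>) {()} (\<lambda>_. fst \<mu>') \<psi> \<and>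
      rel_le X {()} (qcomp mult {()} (\<lambda>_. fst \<mu>) (\<lambda>x _. snd \<mu> x) \<psi>) (\<lambda>x _. snd \<mu>' x)}"
      unfolding qrel_def rel_le_def qcomp_def
      by (intro CollectI exI[of _ "\<lambda>_ _. v"]) auto
  qed
  then show ?thesis unfolding prel_def qlift_def by simp
qed

lemma prel_DQ: "prel mult X \<mu> \<mu>' \<in> DQ mult (fst \<mu>) (fst \<mu>')"
  unfolding prel_eq by (rule DQ_Sup) blast

lemma prel_char:
  assumes mu: "\<mu> \<in> pset mult X nX R" and v: "v \<in> DQ mult (fst \<mu>) (fst \<mu>')"
  shows "v \<le> prel mult X \<mu> \<mu>' \<longleftrightarrow> (\<forall>x\<in>X. rimp mult v (fst \<mu>) \<odot> snd \<mu> x \<le> snd \<mu>' x)"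
proof
  assume "\<forall>x\<in>X. rimp mult v (fst \<mu>) \<odot> snd \<mu> x \<le> snd \<mu>' x"
  then show "v \<le> prel mult X \<mu> \<mu>'" unfolding prel_eq using v by (intro Sup_upper) blast
next
  assume vle: "v \<le> prel mult X \<mu> \<mu>'"
  define C where "C = {v. v \<in> DQ mult (fst \<mu>) (fst \<mu>') \<and>
     (\<forall>x\<in>X. rimp mult v (fst \<mu>) \<odot> snd \<mu> x \<le> snd \<mu>' x)}"
  have w: "Sup C \<in> DQ mult (fst \<mu>) (fst \<mu>')" unfolding C_def by (rule DQ_Sup) blast
  show "\<forall>x\<in>X. rimp mult v (fst \<mu>) \<odot> snd \<mu> x \<le> snd \<mu>' x"
  proof
    fix x assume x: "x \<in> X"
    have a: "snd \<mu> x \<in> DQ mult (nX x) (fst \<mu>)" by (rule pset_D[OF mu x])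
    have "rimp mult v (fst \<mu>) \<odot> snd \<mu> x \<le> rimp mult (Sup C) (fst \<mu>) \<odot> snd \<mu> x"
      using vle unfolding prel_eq C_def[symmetric] by (intro monol rimp_mono)
    also have "\<dots> = Sup C \<odot> limp mult (fst \<mu>) (snd \<mu> x)" by (rule K[OF w a])
    also have "\<dots> = Sup ((\<lambda>c. c \<odot> limp mult (fst \<mu>) (snd \<mu> x)) ` C)" by (rule supl)
    also have "\<dots> \<le> snd \<mu>' x"
    proof (rule Sup_least)
      fix t assume "t \<in> (\<lambda>c. c \<odot> limp mult (fst \<mu>) (snd \<mu> x)) ` C"
      then obtain c where c: "c \<in> C" and t: "t = c \<odot> limp mult (fst \<mu>) (snd \<mu> x)" by blast
      have cD: "c \<in> DQ mult (fst \<mu>) (fst \<mu>')" using c unfolding C_def by blast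
      have "t = rimp mult c (fst \<mu>) \<odot> snd \<mu> x" using K[OF cD a] t by simp
      also have "\<dots> \<le> snd \<mu>' x" using c x unfolding C_def by blast
      finally show "t \<le> snd \<mu>' x" .
    qed
    finally show "rimp mult v (fst \<mu>) \<odot> snd \<mu> x \<le> snd \<mu>' x" .
  qed
qed

lemma uleq_iff:
  assumes mu: "\<mu> \<in> pset mult X nX R"
  shows "uleq pnorm (prel mult X) \<mu> \<mu>' \<longleftrightarrow> ule X \<mu> \<mu>'"
proof (cases "fst \<mu> = fst \<mu>'")
  case True
  have d: "fst \<mu> \<in> DQ mult (fst \<mu>) (fst \<mu>')" using DQ_refl True by metis
  have "\<forall>x\<in>X. rimp mult (fst \<mu>) (fst \<mu>) \<odot> snd \<mu> x = snd \<mu> x"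
    using unit_DQ pset_D[OF mu] by blast
  then show ?thesis unfolding uleq_def ule_def pnorm_def using prel_char[OF mu d] True by simp
next
  case False
  then show ?thesis unfolding uleq_def ule_def pnorm_def by simp
qed

lemma ule_antisym: "\<mu> \<in> pset mult X nX R \<Longrightarrow> \<mu>' \<in> pset mult X nX R \<Longrightarrow>
   ule X \<mu> \<mu>' \<Longrightarrow> ule X \<mu>' \<mu> \<Longrightarrow> \<mu> = \<mu>'"
proof -
  assume a: "\<mu> \<in> pset mult X nX R" "\<mu>' \<in> pset mult X nX R" "ule X \<mu> \<mu>'" "ule X \<mu>' \<mu>"
  have "snd \<mu> = snd \<mu>'"
  proof
    fix x show "snd \<mu> x = snd \<mu>' x"
    proof (cases "x \<in> X")
      case True then show ?thesis using a(3,4) unfolding ule_def by (meson antisym)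
    next
      case False then show ?thesis using pset_out a(1,2) by metis
    qed
  qed
  moreover have "fst \<mu> = fst \<mu>'" using a(3) unfolding ule_def by simp
  ultimately show ?thesis by (simp add: prod_eq_iff)
qed

lemma qpre_DQ: "qpreorder mult X nX R \<Longrightarrow> z \<in> X \<Longrightarrow> y \<in> X \<Longrightarrow> R z y \<in> DQ mult (nX z) (nX y)"
  unfolding qpreorder_def qrel_def by blast

lemma qpre_refl: "qpreorder mult X nX R \<Longrightarrow> x \<in> X \<Longrightarrow> nX x \<le> R x x"
  unfolding qpreorder_def rel_le_def qid_def by force

lemma qpre_trans: "qpreorder mult X nX R \<Longrightarrow> z \<in> X \<Longrightarrow> y \<in> X \<Longrightarrow> x \<in> X \<Longrightarrow>
   rimp mult (R y x) (nX y) \<odot> R z y \<le> R z x"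
  unfolding qpreorder_def rel_le_def qcomp_def by (force simp: Sup_le_iff)

lemma pcomp_in:
  assumes XR: "qpreorder mult X nX R" and mu: "\<mu> \<in> pset mult X nX R"
    and u: "u \<in> DQ mult (fst \<mu>) q"
  shows "pcomp mult u q \<mu> \<in> pset mult X nX R"
  unfolding pcomp_def pset_iff
proof (intro conjI ballI allI impI)
  fix x assume "x \<notin> X" then show "rimp mult u (fst \<mu>) \<odot> snd \<mu> x = bot"
    using pset_out[OF mu] botr by simp
next
  fix x assume "x \<in> X"
  then show "rimp mult u (fst \<mu>) \<odot> snd \<mu> x \<in> DQ mult (nX x) q"
    using comp_DQ[OF u pset_D[OF mu]] by blast
next
  fix z y assume z: "z \<in> X" and y: "y \<in> X"
  have "rimp mult (rimp mult u (fst \<mu>) \<odot> snd \<mu> y) (nX y) \<odot> R z y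
     = rimp mult u (fst \<mu>) \<odot> (rimp mult (snd \<mu> y) (nX y) \<odot> R z y)"
    by (rule comp_assoc[OF u pset_D[OF mu y] qpre_DQ[OF XR z y]])
  also have "\<dots> \<le> rimp mult u (fst \<mu>) \<odot> snd \<mu> z" by (rule monor, rule pset_low[OF mu z y])
  finally show "rimp mult (rimp mult u (fst \<mu>) \<odot> snd \<mu> y) (nX y) \<odot> R z y
     \<le> rimp mult u (fst \<mu>) \<odot> snd \<mu> z" .
qed

lemma yon_in:
  assumes XR: "qpreorder mult X nX R" and x: "x \<in> X"
  shows "yon X nX R x \<in> pset mult X nX R"
  unfolding yon_def pset_iff
  using qpre_DQ[OF XR _ x] qpre_trans[OF XR _ _ x] by auto

lemma qord_D: "qord_map A nA RA B nB RB f \<Longrightarrow> a \<in> A \<Longrightarrow> f a \<in> B \<and> nB (f a) = nA a"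
  unfolding qord_map_def by blast
lemma qord_R: "qord_map A nA RA B nB RB f \<Longrightarrow> a \<in> A \<Longrightarrow> a' \<in> A \<Longrightarrow> RA a a' \<le> RB (f a) (f a')"
  unfolding qord_map_def by blast

lemma fmono:
  assumes f: "qord_map (pset mult X nX RX) pnorm (prel mult X) (pset mult Y nY RY) pnorm (prel mult Y) f"
    and m1: "\<mu> \<in> pset mult X nX RX" and m2: "\<mu>' \<in> pset mult X nX RX" and le: "ule X \<mu> \<mu>'"
  shows "ule Y (f \<mu>) (f \<mu>')"
proof -
  have "uleq pnorm (prel mult X) \<mu> \<mu>'" using uleq_iff[OF m1] le by simp
  then have "uleq pnorm (prel mult Y) (f \<mu>) (f \<mu>')"
    unfolding uleq_def using qord_D[OF f m1] qord_D[OF f m2] qord_R[OF f m1 m2] by (metis order_trans)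
  then show ?thesis using uleq_iff[OF conjunct1[OF qord_D[OF f m1]]] by simp
qed

lemma lax:
  assumes XR: "qpreorder mult X nX RX"
    and f: "qord_map (pset mult X nX RX) pnorm (prel mult X) (pset mult Y nY RY) pnorm (prel mult Y) f"
    and mu: "\<mu> \<in> pset mult X nX RX" and u: "u \<in> DQ mult (fst \<mu>) q"
  shows "ule Y (pcomp mult u q (f \<mu>)) (f (pcomp mult u q \<mu>))"
proof -
  have n0: "pcomp mult u q \<mu> \<in> pset mult X nX RX" by (rule pcomp_in[OF XR mu u])
  have u0: "u \<in> DQ mult (fst \<mu>) (fst (pcomp mult u q \<mu>))" using u unfolding pcomp_def by simp
  have "u \<le> prel mult X \<mu> (pcomp mult u q \<mu>)" using prel_char[OF mu u0] unfolding pcomp_def by simp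
  also have "\<dots> \<le> prel mult Y (f \<mu>) (f (pcomp mult u q \<mu>))" by (rule qord_R[OF f mu n0])
  finally have le: "u \<le> prel mult Y (f \<mu>) (f (pcomp mult u q \<mu>))" .
  have fm: "f \<mu> \<in> pset mult Y nY RY" "fst (f \<mu>) = fst \<mu>" using qord_D[OF f mu] unfolding pnorm_def by auto
  have fn: "fst (f (pcomp mult u q \<mu>)) = q" using qord_D[OF f n0] unfolding pnorm_def pcomp_def by auto
  have u1: "u \<in> DQ mult (fst (f \<mu>)) (fst (f (pcomp mult u q \<mu>)))" using u fm fn by simp
  have "\<forall>y\<in>Y. rimp mult u (fst (f \<mu>)) \<odot> snd (f \<mu>) y \<le> snd (f (pcomp mult u q \<mu>)) y"
    using prel_char[OF fm(1) u1] le by blast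
  then show ?thesis unfolding ule_def using fm fn by (simp add: pcomp_def)
qed


lemma ul_adj:
  assumes f: "qord_map (pset mult X nX RX) pnorm (prel mult X) (pset mult Y nY RY) pnorm (prel mult Y) f"
    and ul: "ul_left_adjoint (pset mult X nX RX) pnorm (prel mult X) (pset mult Y nY RY) pnorm (prel mult Y) f"
  shows "\<exists>g. (\<forall>\<nu>\<in>pset mult Y nY RY. g \<nu> \<in> pset mult X nX RX \<and> fst (g \<nu>) = fst \<nu>) \<and>
    (\<forall>\<mu>\<in>pset mult X nX RX. \<forall>\<nu>\<in>pset mult Y nY RY. ule Y (f \<mu>) \<nu> \<longleftrightarrow> ule X \<mu> (g \<nu>))"
proof -
  obtain g where g1: "\<forall>\<nu>\<in>pset mult Y nY RY. g \<nu> \<in> pset mult X nX RX"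
    and g2: "\<forall>\<mu>\<in>pset mult X nX RX. \<forall>\<nu>\<in>pset mult Y nY RY.
       uleq pnorm (prel mult Y) (f \<mu>) \<nu> \<longleftrightarrow> uleq pnorm (prel mult X) \<mu> (g \<nu>)"
    using ul unfolding ul_left_adjoint_def by blast
  have adj: "\<forall>\<mu>\<in>pset mult X nX RX. \<forall>\<nu>\<in>pset mult Y nY RY. ule Y (f \<mu>) \<nu> \<longleftrightarrow> ule X \<mu> (g \<nu>)"
  proof (intro ballI)
    fix \<mu> \<nu> assume m: "\<mu> \<in> pset mult X nX RX" and n: "\<nu> \<in> pset mult Y nY RY"
    have fm: "f \<mu> \<in> pset mult Y nY RY" using qord_D[OF f m] by simp
    show "ule Y (f \<mu>) \<nu> \<longleftrightarrow> ule X \<mu> (g \<nu>)"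
    proof -
      have "uleq pnorm (prel mult Y) (f \<mu>) \<nu> \<longleftrightarrow> uleq pnorm (prel mult X) \<mu> (g \<nu>)"
        using g2 m n by blast
      then show ?thesis using uleq_iff[OF fm, of \<nu>] uleq_iff[OF m, of "g \<nu>"] by simp
    qed
  qed
  have "\<forall>\<nu>\<in>pset mult Y nY RY. fst (g \<nu>) = fst \<nu>"
  proof
    fix \<nu> assume n: "\<nu> \<in> pset mult Y nY RY"
    have gn: "g \<nu> \<in> pset mult X nX RX" using g1 n by simp
    have "ule Y (f (g \<nu>)) \<nu>" using adj gn n ule_refl by blast
    then have "fst (f (g \<nu>)) = fst \<nu>" unfolding ule_def by simp
    moreover have "fst (f (g \<nu>)) = fst (g \<nu>)" using qord_D[OF f gn] unfolding pnorm_def by simp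
    ultimately show "fst (g \<nu>) = fst \<nu>" by simp
  qed
  then show ?thesis using g1 adj by blast
qed

lemma tensor_III:
  assumes XR: "qpreorder mult X nX RX" and YR: "qpreorder mult Y nY RY"
    and f: "qord_map (pset mult X nX RX) pnorm (prel mult X) (pset mult Y nY RY) pnorm (prel mult Y) f"
    and g1: "\<forall>\<nu>\<in>pset mult Y nY RY. g \<nu> \<in> pset mult X nX RX \<and> fst (g \<nu>) = fst \<nu>"
    and adj: "\<forall>\<mu>\<in>pset mult X nX RX. \<forall>\<nu>\<in>pset mult Y nY RY. ule Y (f \<mu>) \<nu> \<longleftrightarrow> ule X \<mu> (g \<nu>)"
    and yt: "\<forall>x\<in>X. \<forall>q u. u \<in> DQ mult (nX x) q \<longrightarrow>
            f (pcomp mult u q (yon X nX RX x)) = pcomp mult u q (f (yon X nX RX x))"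
  shows "\<forall>\<mu>\<in>pset mult X nX RX. \<forall>q u. u \<in> DQ mult (pnorm \<mu>) q \<longrightarrow>
            f (pcomp mult u q \<mu>) = pcomp mult u q (f \<mu>)"
proof (intro ballI allI impI)
  fix \<mu> q u assume mu: "\<mu> \<in> pset mult X nX RX" and u': "u \<in> DQ mult (pnorm \<mu>) q"
  define p where "p = fst \<mu>"
  have u: "u \<in> DQ mult p q" using u' unfolding p_def pnorm_def .
  have fm: "f \<mu> \<in> pset mult Y nY RY" "fst (f \<mu>) = p" using qord_D[OF f mu] unfolding pnorm_def p_def by auto
  define \<nu> where "\<nu> = pcomp mult u q (f \<mu>)"
  have nu: "\<nu> \<in> pset mult Y nY RY" unfolding \<nu>_def by (rule pcomp_in[OF YR fm(1)], simp add: fm u)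
  have n0: "pcomp mult u q \<mu> \<in> pset mult X nX RX" by (rule pcomp_in[OF XR mu], simp add: u p_def[symmetric])
  have fn0: "f (pcomp mult u q \<mu>) \<in> pset mult Y nY RY" using qord_D[OF f n0] by simp
  have A: "ule Y \<nu> (f (pcomp mult u q \<mu>))" unfolding \<nu>_def by (rule lax[OF XR f mu], simp add: u p_def[symmetric])
  have gn: "g \<nu> \<in> pset mult X nX RX" "fst (g \<nu>) = q" using g1 nu unfolding \<nu>_def pcomp_def by auto
  have B: "ule X (pcomp mult u q \<mu>) (g \<nu>)"
    unfolding ule_def
  proof (intro conjI ballI)
    show "fst (pcomp mult u q \<mu>) = fst (g \<nu>)" using gn unfolding pcomp_def by simp
  next
    fix x assume x: "x \<in> X"
    define a where "a = snd \<mu> x"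
    have a: "a \<in> DQ mult (nX x) p" unfolding a_def p_def by (rule pset_D[OF mu x])
    define b where "b = rimp mult u p \<odot> a"
    have b: "b \<in> DQ mult (nX x) q" unfolding b_def by (rule comp_DQ[OF u a])
    define yx where "yx = yon X nX RX x"
    have yx: "yx \<in> pset mult X nX RX" "fst yx = nX x" unfolding yx_def using yon_in[OF XR x]
      by (auto simp: yon_def)
    have fy: "f yx \<in> pset mult Y nY RY" "fst (f yx) = nX x" using qord_D[OF f yx(1)] yx(2)
      unfolding pnorm_def by auto
    have a2: "pcomp mult a p yx \<in> pset mult X nX RX" by (rule pcomp_in[OF XR yx(1)], simp add: yx a)
    have a1: "ule X (pcomp mult a p yx) \<mu>"
      unfolding ule_def pcomp_def using pset_low[OF mu _ x] yx(2)
      by (simp add: p_def a_def yx_def yon_def)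
    have "ule Y (f (pcomp mult a p yx)) (f \<mu>)" by (rule fmono[OF f a2 mu a1])
    moreover have "f (pcomp mult a p yx) = pcomp mult a p (f yx)" using yt x a unfolding yx_def by blast
    ultimately have a3: "\<forall>y\<in>Y. rimp mult a (nX x) \<odot> snd (f yx) y \<le> snd (f \<mu>) y"
      unfolding ule_def pcomp_def using fy(2) by simp
    have b1: "pcomp mult b q yx \<in> pset mult X nX RX" by (rule pcomp_in[OF XR yx(1)], simp add: yx b)
    have "ule Y (pcomp mult b q (f yx)) \<nu>"
      unfolding ule_def
    proof (intro conjI ballI)
      show "fst (pcomp mult b q (f yx)) = fst \<nu>" unfolding \<nu>_def pcomp_def by simp
    next
      fix y assume y: "y \<in> Y"
      have c: "snd (f yx) y \<in> DQ mult (nY y) (nX x)" using pset_D[OF fy(1) y] fy(2) by simp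
      have "snd (pcomp mult b q (f yx)) y = rimp mult b (nX x) \<odot> snd (f yx) y"
        unfolding pcomp_def using fy(2) by simp
      also have "\<dots> = rimp mult u p \<odot> (rimp mult a (nX x) \<odot> snd (f yx) y)"
        unfolding b_def by (rule comp_assoc[OF u a c])
      also have "\<dots> \<le> rimp mult u p \<odot> snd (f \<mu>) y" by (rule monor, rule a3[rule_format, OF y])
      also have "\<dots> = snd \<nu> y" unfolding \<nu>_def pcomp_def using fm(2) by simp
      finally show "snd (pcomp mult b q (f yx)) y \<le> snd \<nu> y" .
    qed
    moreover have "f (pcomp mult b q yx) = pcomp mult b q (f yx)" using yt x b unfolding yx_def by blast
    ultimately have "ule Y (f (pcomp mult b q yx)) \<nu>" by simp
    then have "ule X (pcomp mult b q yx) (g \<nu>)" using adj b1 nu by blast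
    then have "rimp mult b (nX x) \<odot> RX x x \<le> snd (g \<nu>) x"
      unfolding ule_def pcomp_def using x yx(2) by (simp add: yx_def yon_def)
    moreover have "b \<le> rimp mult b (nX x) \<odot> RX x x"
    proof -
      have "b = rimp mult b (nX x) \<odot> nX x" using DQ1[OF b] by simp
      also have "\<dots> \<le> rimp mult b (nX x) \<odot> RX x x" by (rule monor, rule qpre_refl[OF XR x])
      finally show ?thesis .
    qed
    ultimately have "b \<le> snd (g \<nu>) x" by (rule order_trans[rotated])
    then show "snd (pcomp mult u q \<mu>) x \<le> snd (g \<nu>) x"
      unfolding pcomp_def b_def a_def p_def by simp
  qed
  have "ule Y (f (pcomp mult u q \<mu>)) \<nu>" using adj n0 nu B by blast
  then show "f (pcomp mult u q \<mu>) = pcomp mult u q (f \<mu>)"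
    using ule_antisym[OF fn0 nu _ A] unfolding \<nu>_def by blast
qed


lemma II_to_I:
  assumes XR: "qpreorder mult X nX RX" and YR: "qpreorder mult Y nY RY"
    and f: "qord_map (pset mult X nX RX) pnorm (prel mult X) (pset mult Y nY RY) pnorm (prel mult Y) f"
    and g1: "\<forall>\<nu>\<in>pset mult Y nY RY. g \<nu> \<in> pset mult X nX RX \<and> fst (g \<nu>) = fst \<nu>"
    and adj: "\<forall>\<mu>\<in>pset mult X nX RX. \<forall>\<nu>\<in>pset mult Y nY RY. ule Y (f \<mu>) \<nu> \<longleftrightarrow> ule X \<mu> (g \<nu>)"
    and ten: "\<forall>\<mu>\<in>pset mult X nX RX. \<forall>q u. u \<in> DQ mult (pnorm \<mu>) q \<longrightarrow>
            f (pcomp mult u q \<mu>) = pcomp mult u q (f \<mu>)"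
  shows "qord_map (pset mult Y nY RY) pnorm (prel mult Y) (pset mult X nX RX) pnorm (prel mult X) g
        \<and> qgalois (pset mult X nX RX) pnorm (prel mult X) (pset mult Y nY RY) pnorm (prel mult Y) f g"
proof -
  have counit: "ule Y (f (g \<nu>)) \<nu>" if n: "\<nu> \<in> pset mult Y nY RY" for \<nu>
    using adj g1 n ule_refl by blast
  have unit: "ule X \<mu> (g (f \<mu>))" if m: "\<mu> \<in> pset mult X nX RX" for \<mu>
    using adj qord_D[OF f m] m ule_refl by blast
  have R: "prel mult Y \<nu> \<nu>' \<le> prel mult X (g \<nu>) (g \<nu>')"
    if n: "\<nu> \<in> pset mult Y nY RY" and n': "\<nu>' \<in> pset mult Y nY RY" for \<nu> \<nu>'
  proof -
    define v where "v = prel mult Y \<nu> \<nu>'"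
    have vD: "v \<in> DQ mult (fst \<nu>) (fst \<nu>')" unfolding v_def by (rule prel_DQ)
    have vc: "\<forall>y\<in>Y. rimp mult v (fst \<nu>) \<odot> snd \<nu> y \<le> snd \<nu>' y"
      using prel_char[OF n vD] unfolding v_def by simp
    have gn: "g \<nu> \<in> pset mult X nX RX" "fst (g \<nu>) = fst \<nu>" using g1 n by auto
    have gn': "g \<nu>' \<in> pset mult X nX RX" "fst (g \<nu>') = fst \<nu>'" using g1 n' by auto
    have vD': "v \<in> DQ mult (fst (g \<nu>)) (fst (g \<nu>'))" using vD gn gn' by simp
    define t where "t = pcomp mult v (fst \<nu>') (g \<nu>)"
    have t: "t \<in> pset mult X nX RX" unfolding t_def by (rule pcomp_in[OF XR gn(1) vD'[unfolded gn'(2)]])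
    have ft: "f t = pcomp mult v (fst \<nu>') (f (g \<nu>))"
      using ten gn(1) vD'[unfolded gn'(2)] unfolding t_def pnorm_def by blast
    have fg: "f (g \<nu>) \<in> pset mult Y nY RY" "fst (f (g \<nu>)) = fst \<nu>"
      using qord_D[OF f gn(1)] gn(2) unfolding pnorm_def by auto
    have "ule Y (f t) \<nu>'"
      unfolding ft ule_def
    proof (intro conjI ballI)
      fix y assume y: "y \<in> Y"
      have "snd (pcomp mult v (fst \<nu>') (f (g \<nu>))) y = rimp mult v (fst (f (g \<nu>))) \<odot> snd (f (g \<nu>)) y"
        by (simp add: pcomp_def)
      also have "rimp mult v (fst (f (g \<nu>))) \<odot> snd (f (g \<nu>)) y \<le> rimp mult v (fst \<nu>) \<odot> snd \<nu> y"
        using counit[OF n] y fg(2) unfolding ule_def by (simp add: monor)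
      also have "\<dots> \<le> snd \<nu>' y" using vc y by blast
      finally show "snd (pcomp mult v (fst \<nu>') (f (g \<nu>))) y \<le> snd \<nu>' y" .
    qed (simp add: pcomp_def)
    then have "ule X t (g \<nu>')" using adj t n' by blast
    then have "\<forall>x\<in>X. rimp mult v (fst (g \<nu>)) \<odot> snd (g \<nu>) x \<le> snd (g \<nu>') x"
      unfolding ule_def t_def pcomp_def by simp
    then show ?thesis using prel_char[OF gn(1) vD'] unfolding v_def by blast
  qed
  have Q1: "qord_map (pset mult Y nY RY) pnorm (prel mult Y) (pset mult X nX RX) pnorm (prel mult X) g"
    unfolding qord_map_def pnorm_def using g1 R by blast
  have M1: "map_le (pset mult X nX RX) pnorm (prel mult X) id (g \<circ> f)"
    unfolding map_le_def
  proof
    fix \<mu> assume m: "\<mu> \<in> pset mult X nX RX"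
    have "uleq pnorm (prel mult X) \<mu> (g (f \<mu>))" using uleq_iff[OF m] unit[OF m] by simp
    then have "pnorm \<mu> \<le> prel mult X \<mu> (g (f \<mu>))" unfolding uleq_def by blast
    then show "pnorm \<mu> \<le> prel mult X (id \<mu>) ((g \<circ> f) \<mu>)" by simp
  qed
  have M2: "map_le (pset mult Y nY RY) pnorm (prel mult Y) (f \<circ> g) id"
    unfolding map_le_def
  proof
    fix \<nu> assume n: "\<nu> \<in> pset mult Y nY RY"
    have fg: "f (g \<nu>) \<in> pset mult Y nY RY" using qord_D[OF f] g1 n by blast
    have "uleq pnorm (prel mult Y) (f (g \<nu>)) \<nu>" using uleq_iff[OF fg] counit[OF n] by simp
    then have "pnorm (f (g \<nu>)) = pnorm \<nu>" "pnorm (f (g \<nu>)) \<le> prel mult Y (f (g \<nu>)) \<nu>"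
      unfolding uleq_def by blast+
    then show "pnorm \<nu> \<le> prel mult Y ((f \<circ> g) \<nu>) (id \<nu>)" by simp
  qed
  show ?thesis using Q1 M1 M2 unfolding qgalois_def by simp
qed

lemma I_to_II:
  assumes XR: "qpreorder mult X nX RX" and YR: "qpreorder mult Y nY RY"
    and f: "qord_map (pset mult X nX RX) pnorm (prel mult X) (pset mult Y nY RY) pnorm (prel mult Y) f"
    and g: "qord_map (pset mult Y nY RY) pnorm (prel mult Y) (pset mult X nX RX) pnorm (prel mult X) g"
    and gal: "qgalois (pset mult X nX RX) pnorm (prel mult X) (pset mult Y nY RY) pnorm (prel mult Y) f g"
  shows "ul_left_adjoint (pset mult X nX RX) pnorm (prel mult X) (pset mult Y nY RY) pnorm (prel mult Y) f
      \<and> (\<forall>\<mu>\<in>pset mult X nX RX. \<forall>q u. u \<in> DQ mult (pnorm \<mu>) q \<longrightarrow>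
            f (pcomp mult u q \<mu>) = pcomp mult u q (f \<mu>))"
proof -
  have unit: "ule X \<mu> (g (f \<mu>))" if m: "\<mu> \<in> pset mult X nX RX" for \<mu>
  proof -
    have "pnorm \<mu> \<le> prel mult X \<mu> (g (f \<mu>))" using gal m unfolding qgalois_def map_le_def by simp
    moreover have "pnorm (g (f \<mu>)) = pnorm \<mu>" using qord_D[OF g] qord_D[OF f m] by metis
    ultimately have "uleq pnorm (prel mult X) \<mu> (g (f \<mu>))" unfolding uleq_def by simp
    then show ?thesis using uleq_iff[OF m] by simp
  qed
  have counit: "ule Y (f (g \<nu>)) \<nu>" if n: "\<nu> \<in> pset mult Y nY RY" for \<nu>
  proof -
    have "pnorm \<nu> \<le> prel mult Y (f (g \<nu>)) \<nu>" using gal n unfolding qgalois_def map_le_def by simp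
    moreover have "pnorm (f (g \<nu>)) = pnorm \<nu>" using qord_D[OF f] qord_D[OF g n] by metis
    moreover have fg: "f (g \<nu>) \<in> pset mult Y nY RY" using qord_D[OF f] qord_D[OF g n] by metis
    ultimately have "uleq pnorm (prel mult Y) (f (g \<nu>)) \<nu>" unfolding uleq_def by simp
    then show ?thesis using uleq_iff[OF fg] by simp
  qed
  have adj: "ule Y (f \<mu>) \<nu> \<longleftrightarrow> ule X \<mu> (g \<nu>)"
    if m: "\<mu> \<in> pset mult X nX RX" and n: "\<nu> \<in> pset mult Y nY RY" for \<mu> \<nu>
  proof
    assume "ule Y (f \<mu>) \<nu>"
    then have "ule X (g (f \<mu>)) (g \<nu>)" using fmono[OF g _ n] qord_D[OF f m] by blast
    then show "ule X \<mu> (g \<nu>)" using unit[OF m] ule_trans by blast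
  next
    assume "ule X \<mu> (g \<nu>)"
    then have "ule Y (f \<mu>) (f (g \<nu>))" using fmono[OF f m] qord_D[OF g n] by blast
    then show "ule Y (f \<mu>) \<nu>" using counit[OF n] ule_trans by blast
  qed
  have UL: "ul_left_adjoint (pset mult X nX RX) pnorm (prel mult X) (pset mult Y nY RY) pnorm (prel mult Y) f"
    unfolding ul_left_adjoint_def
  proof (intro exI[of _ g] conjI ballI)
    fix \<nu> assume "\<nu> \<in> pset mult Y nY RY" then show "g \<nu> \<in> pset mult X nX RX" using qord_D[OF g] by blast
  next
    fix \<mu> \<nu> assume m: "\<mu> \<in> pset mult X nX RX" and n: "\<nu> \<in> pset mult Y nY RY"
    have fm: "f \<mu> \<in> pset mult Y nY RY" using qord_D[OF f m] by simp
    show "uleq pnorm (prel mult Y) (f \<mu>) \<nu> \<longleftrightarrow> uleq pnorm (prel mult X) \<mu> (g \<nu>)"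
      using uleq_iff[OF fm, of \<nu>] uleq_iff[OF m, of "g \<nu>"] adj[OF m n] by simp
  qed
  have T: "f (pcomp mult u q \<mu>) = pcomp mult u q (f \<mu>)"
    if m: "\<mu> \<in> pset mult X nX RX" and u': "u \<in> DQ mult (pnorm \<mu>) q" for \<mu> q u
  proof -
    have u: "u \<in> DQ mult (fst \<mu>) q" using u' unfolding pnorm_def .
    have fm: "f \<mu> \<in> pset mult Y nY RY" "fst (f \<mu>) = fst \<mu>" using qord_D[OF f m] unfolding pnorm_def by auto
    have gfm: "g (f \<mu>) \<in> pset mult X nX RX" "fst (g (f \<mu>)) = fst \<mu>"
      using qord_D[OF g fm(1)] fm(2) unfolding pnorm_def by auto
    define \<nu> where "\<nu> = pcomp mult u q (f \<mu>)"
    have nu: "\<nu> \<in> pset mult Y nY RY" unfolding \<nu>_def by (rule pcomp_in[OF YR fm(1)], simp add: fm u)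
    have n0: "pcomp mult u q \<mu> \<in> pset mult X nX RX" by (rule pcomp_in[OF XR m u])
    have fn0: "f (pcomp mult u q \<mu>) \<in> pset mult Y nY RY" using qord_D[OF f n0] by simp
    have A: "ule Y \<nu> (f (pcomp mult u q \<mu>))" unfolding \<nu>_def by (rule lax[OF XR f m u])
    have B1: "ule X (pcomp mult u q \<mu>) (pcomp mult u q (g (f \<mu>)))"
      using unit[OF m] gfm(2) unfolding ule_def pcomp_def by (simp add: monor)
    have B2: "ule X (pcomp mult u q (g (f \<mu>))) (g \<nu>)"
      unfolding \<nu>_def by (rule lax[OF YR g fm(1)], simp add: fm u)
    have "ule X (pcomp mult u q \<mu>) (g \<nu>)" using B1 B2 ule_trans by blast
    then have "ule Y (f (pcomp mult u q \<mu>)) \<nu>" using adj[OF n0 nu] by simp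
    then show ?thesis using ule_antisym[OF fn0 nu _ A] unfolding \<nu>_def by blast
  qed
  show ?thesis using UL T by blast
qed

end

theorem proposition4p15:
  fixes mult :: "'q::complete_lattice \<Rightarrow> 'q \<Rightarrow> 'q" and e :: 'q
    and X :: "'a set" and nX :: "'a \<Rightarrow> 'q" and RX :: "'a \<Rightarrow> 'a \<Rightarrow> 'q"
    and Y :: "'b set" and nY :: "'b \<Rightarrow> 'q" and RY :: "'b \<Rightarrow> 'b \<Rightarrow> 'q"
    and f :: "'q \<times> ('a \<Rightarrow> 'q) \<Rightarrow> 'q \<times> ('b \<Rightarrow> 'q)"
  assumes Q: "quantale mult e"
    and X: "qpreorder mult X nX RX"
    and Y: "qpreorder mult Y nY RY"
    and f: "qord_map (pset mult X nX RX) pnorm (prel mult X)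
                     (pset mult Y nY RY) pnorm (prel mult Y) f"
  shows
   "((\<exists>g. qord_map (pset mult Y nY RY) pnorm (prel mult Y)
                   (pset mult X nX RX) pnorm (prel mult X) g
        \<and> qgalois (pset mult X nX RX) pnorm (prel mult X)
                  (pset mult Y nY RY) pnorm (prel mult Y) f g)
     \<longleftrightarrow>
     (ul_left_adjoint (pset mult X nX RX) pnorm (prel mult X)
                      (pset mult Y nY RY) pnorm (prel mult Y) f
      \<and> (\<forall>\<mu>\<in>pset mult X nX RX. \<forall>q u. u \<in> DQ mult (pnorm \<mu>) q \<longrightarrow>
            f (pcomp mult u q \<mu>) = pcomp mult u q (f \<mu>))))
    \<and>
    ((\<exists>g. qord_map (pset mult Y nY RY) pnorm (prel mult Y)
                   (pset mult X nX RX) pnorm (prel mult X) g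
        \<and> qgalois (pset mult X nX RX) pnorm (prel mult X)
                  (pset mult Y nY RY) pnorm (prel mult Y) f g)
     \<longleftrightarrow>
     (ul_left_adjoint (pset mult X nX RX) pnorm (prel mult X)
                      (pset mult Y nY RY) pnorm (prel mult Y) f
      \<and> (\<forall>x\<in>X. \<forall>q u. u \<in> DQ mult (nX x) q \<longrightarrow>
            f (pcomp mult u q (yon X nX RX x)) = pcomp mult u q (f (yon X nX RX x)))))"
proof -
  interpret qt mult e by (rule qt.intro[OF Q])
  let ?I = "\<exists>g. qord_map (pset mult Y nY RY) pnorm (prel mult Y)
                   (pset mult X nX RX) pnorm (prel mult X) g
        \<and> qgalois (pset mult X nX RX) pnorm (prel mult X)
                  (pset mult Y nY RY) pnorm (prel mult Y) f g"
  let ?UL = "ul_left_adjoint (pset mult X nX RX) pnorm (prel mult X)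
                      (pset mult Y nY RY) pnorm (prel mult Y) f"
  let ?T2 = "\<forall>\<mu>\<in>pset mult X nX RX. \<forall>q u. u \<in> DQ mult (pnorm \<mu>) q \<longrightarrow>
            f (pcomp mult u q \<mu>) = pcomp mult u q (f \<mu>)"
  let ?T3 = "\<forall>x\<in>X. \<forall>q u. u \<in> DQ mult (nX x) q \<longrightarrow>
            f (pcomp mult u q (yon X nX RX x)) = pcomp mult u q (f (yon X nX RX x))"
  have a: "?I \<Longrightarrow> ?UL \<and> ?T2" using I_to_II[OF X Y f] by blast
  have b: "?UL \<and> ?T2 \<Longrightarrow> ?I"
  proof -
    assume h: "?UL \<and> ?T2"
    obtain g where g1: "\<forall>\<nu>\<in>pset mult Y nY RY. g \<nu> \<in> pset mult X nX RX \<and> fst (g \<nu>) = fst \<nu>"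
      and adj: "\<forall>\<mu>\<in>pset mult X nX RX. \<forall>\<nu>\<in>pset mult Y nY RY. ule Y (f \<mu>) \<nu> \<longleftrightarrow> ule X \<mu> (g \<nu>)"
      using ul_adj[OF f] h by blast
    show ?I using II_to_I[OF X Y f g1 adj] h by blast
  qed
  have c: "?T2 \<Longrightarrow> ?T3"
  proof -
    assume h: ?T2
    show ?T3
    proof (intro ballI allI impI)
      fix x q u assume x: "x \<in> X" and u: "u \<in> DQ mult (nX x) q"
      have "yon X nX RX x \<in> pset mult X nX RX" by (rule yon_in[OF X x])
      moreover have "pnorm (yon X nX RX x) = nX x" unfolding pnorm_def yon_def by simp
      ultimately show "f (pcomp mult u q (yon X nX RX x)) = pcomp mult u q (f (yon X nX RX x))"
        using h u by metis
    qed
  qed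
  have d: "?UL \<and> ?T3 \<Longrightarrow> ?T2"
  proof -
    assume h: "?UL \<and> ?T3"
    obtain g where g1: "\<forall>\<nu>\<in>pset mult Y nY RY. g \<nu> \<in> pset mult X nX RX \<and> fst (g \<nu>) = fst \<nu>"
      and adj: "\<forall>\<mu>\<in>pset mult X nX RX. \<forall>\<nu>\<in>pset mult Y nY RY. ule Y (f \<mu>) \<nu> \<longleftrightarrow> ule X \<mu> (g \<nu>)"
      using ul_adj[OF f] h by blast
    show ?T2 using tensor_III[OF X Y f g1 adj] h by blast
  qed
  show ?thesis using a b c d by blast
qed

end
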